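(* Let $n\ge2$ and $W_n=(w_{ij},\ 1\le j<i\le n)$ be a triangular array of positive reals. Then $T_n=T^\triangle_n(W_n)$ satisfies $$\mathcal{E}^\triangle(T_n)=\sum_{1\le j<i\le n}\frac1{w_{ij}}.$$
   Context: Triangular arrays are $X=(x_{ij},\ 1\le j<i\le n)$ of positive reals. Local maps (same formulas as for matrices): for $i\ge3$, $l_{i1}$ replaces $x_{i1}$ by $x_{i-1,1}x_{i1}$; for $2\le j$ with $j+1<i$, $l_{ij}$ replaces $(x_{i-1,j-1},x_{i-1,j},x_{i,j-1},x_{ij})=(a,b,c,d)$ by $(bc/(ab+ac),b,c,d(b+c))$, other entries unchanged. For $1\le j\le n-2$ let $\rho^n_j=l_{n-j+1,1}\circ l_{n-j+2,2}\circ\cdots\circ l_{n-1,j-1}\circ l_{nj}$, and set $\rho^{\triangle,n}_j=\rho^n_j$. Let $r^\triangle_{n,n-1}$ replace $x_{n,n-1}$ by $1/x_{n,n-1}$. With conventions $x_{i0}=1$ and $x_{n+1,n-1}=1$: for $k=0,1,\dots,\lfloor n/2\rfloor-1$, $b^{\triangle,n}_{n-2k,n-2k-1}$ replaces $x_{n-2k,n-2k-1}$ by $x_{n-2k+1,n-2k-1}x_{n-2k,n-2k-2}/x_{n-2k,n-2k-1}$; for $k=1,\dots,\lfloor (n-1)/2\rfloor$, $b^{\triangle,n}_{n-2k+1,n-2k}$ is the identity. Set $\rho^{\triangle,n}_{n-1}=b^{\triangle,n}_{2,1}\circ\cdots\circ b^{\triangle,n}_{n-1,n-2}\circ b^{\triangle,n}_{n,n-1}\circ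 r^\triangle_{n,n-1}$ and $R^\triangle_n=\rho^{\triangle,n}_{n-1}\circ\cdots\circ\rho^{\triangle,n}_1$. Define $T^\triangle_2(x_{21})=x_{21}$ and for $n\ge3$, $T^\triangle_n(X_n)=R^\triangle_n\begin{pmatrix}T^\triangle_{n-1}(X_{n-1})\\ x_{n1}\ \cdots\ x_{n,n-1}\end{pmatrix}$, where $X_{n-1}=(x_{ij},\ 1\le j<i\le n-1)$ and the last row $(x_{n1},\dots,x_{n,n-1})$ is appended. For a triangular array, $\mathcal{E}^\triangle(X)=\frac1{x_{21}}+\sum_{1\le j<i\le n}\frac{x_{i-1,j}+x_{i,j-1}}{x_{ij}}$ with $x_{i0}=x_{ii}=0$ in this sum. *)

theory Defs
  imports Complex_Main
begin

text \<open>A triangular array (x i j, 1 <= j < i <= n) is modelled as a function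
  nat => nat => real; entries outside the triangle are irrelevant.\<close>

type_synonym tarr = "nat \<Rightarrow> nat \<Rightarrow> real"

definition upd2 :: "tarr \<Rightarrow> nat \<Rightarrow> nat \<Rightarrow> real \<Rightarrow> tarr" where
  "upd2 X i j v = (\<lambda>a b. if a = i \<and> b = j then v else X a b)"

definition lmap :: "nat \<Rightarrow> nat \<Rightarrow> tarr \<Rightarrow> tarr" where
  "lmap i j X =
    (if j = 1 then upd2 X i 1 (X (i-1) 1 * X i 1)
     else (let a = X (i-1) (j-1); b = X (i-1) j; c = X i (j-1); d = X i j
           in upd2 (upd2 X (i-1) (j-1) (b*c/(a*b + a*c))) i j (d*(b+c))))"

text \<open>rho^n_j = l_{n-j+1,1} o l_{n-j+2,2} o ... o l_{n,j}  (l_{n,j} applied first).\<close>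
definition rho :: "nat \<Rightarrow> nat \<Rightarrow> tarr \<Rightarrow> tarr" where
  "rho n j X = fold (\<lambda>k Y. lmap (n-j+k) k Y) (rev [1..<j+1]) X"

definition rtri :: "nat \<Rightarrow> tarr \<Rightarrow> tarr" where
  "rtri n X = upd2 X n (n-1) (1 / X n (n-1))"

definition getx :: "nat \<Rightarrow> tarr \<Rightarrow> nat \<Rightarrow> nat \<Rightarrow> real" where
  "getx n X i j = (if j = 0 then 1 else if i = n+1 \<and> j = n-1 then 1 else X i j)"

text \<open>b^{triangle,n}_{m,m-1}: nontrivial iff m = n - 2k with 0 <= k <= floor(n/2)-1,
  i.e. 2 <= m <= n and n - m even; identity otherwise.\<close>
definition bmap :: "nat \<Rightarrow> nat \<Rightarrow> tarr \<Rightarrow> tarr" where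
  "bmap n m X =
    (if 2 \<le> m \<and> m \<le> n \<and> even (n - m)
     then upd2 X m (m-1) (getx n X (m+1) (m-1) * getx n X m (m-2) / X m (m-1))
     else X)"

text \<open>rho^{triangle,n}_{n-1} = b_{2,1} o ... o b_{n,n-1} o r.\<close>
definition rholast :: "nat \<Rightarrow> tarr \<Rightarrow> tarr" where
  "rholast n X = fold (\<lambda>m Y. bmap n m Y) (rev [2..<n+1]) (rtri n X)"

definition Rtri :: "nat \<Rightarrow> tarr \<Rightarrow> tarr" where
  "Rtri n X = rholast n (fold (\<lambda>j Y. rho n j Y) [1..<n-1] X)"

fun Ttri :: "nat \<Rightarrow> tarr \<Rightarrow> tarr" where
  "Ttri 0 X = X"
| "Ttri (Suc 0) X = X"
| "Ttri (Suc (Suc 0)) X = X"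
| "Ttri (Suc (Suc (Suc m))) X =
     Rtri (m+3) (\<lambda>i j. if i < m+3 then Ttri (m+2) X i j else X i j)"

text \<open>Energy, with x_{i0} = x_{ii} = 0.\<close>
definition Etri :: "nat \<Rightarrow> tarr \<Rightarrow> real" where
  "Etri n X = 1 / X 2 1 +
     (\<Sum>i\<in>{1..n}. \<Sum>j\<in>{1..<i}.
        ((if j \<ge> i - 1 then 0 else X (i-1) j) + (if j - 1 = 0 then 0 else X i (j-1))) / X i j)"

end

theory Submission
  imports Defs
begin

definition insum :: "tarr \<Rightarrow> nat \<Rightarrow> nat \<Rightarrow> real" where
  "insum X i j = (if j \<ge> i - 1 then 0 else X (i-1) j) + (if j - 1 = 0 then 0 else X i (j-1))"

definition tm :: "tarr \<Rightarrow> nat \<Rightarrow> nat \<Rightarrow> real" where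
  "tm X i j = insum X i j / X i j"

definition hh :: "nat \<Rightarrow> nat \<Rightarrow> tarr \<Rightarrow> nat \<Rightarrow> nat \<Rightarrow> real" where
  "hh n m X i j = (if i < n \<or> j \<le> m then tm X i j else 1 / X i j)"

definition Ecut :: "nat \<Rightarrow> nat \<Rightarrow> tarr \<Rightarrow> real" where
  "Ecut n m X = 1 / X 2 1 + (\<Sum>i\<in>{1..n}. \<Sum>j\<in>{1..<i}. hh n m X i j)"

definition PP :: "nat \<Rightarrow> (nat \<times> nat) set" where
  "PP n = (SIGMA i:{1..n}. {1..<i})"

definition pos :: "nat \<Rightarrow> tarr \<Rightarrow> bool" where
  "pos n X = (\<forall>i j. 1 \<le> j \<longrightarrow> j < i \<longrightarrow> i \<le> n \<longrightarrow> X i j > 0)"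

definition dupd :: "nat \<Rightarrow> nat \<Rightarrow> tarr \<Rightarrow> tarr" where
  "dupd i j X = upd2 X i j (X i j * insum X i j)"

lemma finite_PP[simp]: "finite (PP n)"
  by (simp add: PP_def)

lemma Ecut_Sigma: "Ecut n m X = 1 / X 2 1 + (\<Sum>(i,j)\<in>PP n. hh n m X i j)"
  by (simp add: Ecut_def PP_def sum.Sigma)

lemma Etri_Ecut: "Etri n X = Ecut n (n-1) X"
  unfolding Etri_def Ecut_def
  by (intro arg_cong2[where f="(+)"] refl sum.cong) (auto simp: hh_def tm_def insum_def)

lemma sum_local:
  fixes f g :: "'a \<Rightarrow> real"
  assumes "finite A" "K \<subseteq> A" "\<And>w. w \<in> A \<Longrightarrow> w \<notin> K \<Longrightarrow> f w = g w"
  shows "sum f A = sum g A + sum (\<lambda>w. f w - g w) K"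
proof -
  have "sum f A - sum g A = sum (\<lambda>w. f w - g w) A" by (simp add: sum_subtractf)
  also have "\<dots> = sum (\<lambda>w. f w - g w) K"
    by (rule sum.mono_neutral_right) (use assms in auto)
  finally show ?thesis by simp
qed

lemma Ecut_local:
  assumes "K \<subseteq> PP n"
    and "\<And>i j. (i,j) \<in> PP n \<Longrightarrow> (i,j) \<notin> K \<Longrightarrow> hh n m1 X1 i j = hh n m2 X2 i j"
  shows "Ecut n m1 X1 = Ecut n m2 X2 + (1 / X1 2 1 - 1 / X2 2 1)
           + (\<Sum>(i,j)\<in>K. hh n m1 X1 i j - hh n m2 X2 i j)"
proof -
  have "(\<Sum>(i,j)\<in>PP n. hh n m1 X1 i j) = (\<Sum>(i,j)\<in>PP n. hh n m2 X2 i j)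
          + (\<Sum>w\<in>K. (case w of (i,j) \<Rightarrow> hh n m1 X1 i j) - (case w of (i,j) \<Rightarrow> hh n m2 X2 i j))"
    by (rule sum_local) (use assms in auto)
  moreover have "(\<Sum>w\<in>K. (case w of (i,j) \<Rightarrow> hh n m1 X1 i j) - (case w of (i,j) \<Rightarrow> hh n m2 X2 i j))
      = (\<Sum>(i,j)\<in>K. hh n m1 X1 i j - hh n m2 X2 i j)"
    by (intro sum.cong) auto
  ultimately show ?thesis by (simp add: Ecut_Sigma)
qed

lemma tm_upd_other:
  assumes "1 \<le> q" "1 \<le> j" "j < i" "(i,j) \<noteq> (p,q)" "(i,j) \<noteq> (p,q+1)" "(i,j) \<noteq> (p+1,q)"
  shows "tm (upd2 Z p q v) i j = tm Z i j"
proof -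
  have 1: "upd2 Z p q v i j = Z i j" using assms(4) by (auto simp: upd2_def)
  have 2: "upd2 Z p q v (i-1) j = Z (i-1) j"
  proof -
    have "(i-1, j) \<noteq> (p,q)"
    proof
      assume "(i-1, j) = (p,q)"
      then have "i = p + 1" "j = q" using assms(2,3) by auto
      then show False using assms(6) by simp
    qed
    then show ?thesis unfolding upd2_def by auto
  qed
  have 3: "j - 1 \<noteq> 0 \<Longrightarrow> upd2 Z p q v i (j-1) = Z i (j-1)"
  proof -
    assume j: "j - 1 \<noteq> 0"
    have "(i, j-1) \<noteq> (p,q)"
    proof
      assume "(i, j-1) = (p,q)"
      then have "i = p" "j = q + 1" using j by auto
      then show False using assms(5) by simp
    qed
    then show ?thesis unfolding upd2_def by auto
  qed
  have "insum (upd2 Z p q v) i j = insum Z i j"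
    unfolding insum_def using 2 3 by simp
  then show ?thesis unfolding tm_def 1 by simp
qed

lemma hh_upd_other:
  assumes "1 \<le> q" "(i,j) \<in> PP n" "(i,j) \<noteq> (p,q)" "(i,j) \<noteq> (p,q+1)" "(i,j) \<noteq> (p+1,q)"
  shows "hh n m (upd2 Z p q v) i j = hh n m Z i j"
proof -
  have ij: "1 \<le> j" "j < i" using assms(2) unfolding PP_def by auto
  have "upd2 Z p q v i j = Z i j" using assms(3) by (auto simp: upd2_def)
  then show ?thesis unfolding hh_def using tm_upd_other[OF assms(1) ij assms(3-5)] by simp
qed

lemma insum_pos:
  assumes "pos n X" "1 \<le> j" "j < i" "i \<le> n" "(i,j) \<noteq> (2,1)"
  shows "insum X i j > 0"
proof (cases "j < i - 1")
  case True
  then have "X (i-1) j > 0" using assms unfolding pos_def by auto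
  moreover have "(if j - 1 = 0 then 0 else X i (j-1)) \<ge> 0"
  proof (cases "j - 1 = 0")
    case False
    then have "X i (j-1) > 0" using assms unfolding pos_def by auto
    then show ?thesis by simp
  qed simp
  ultimately show ?thesis using True unfolding insum_def by auto
next
  case False
  then have "j \<ge> 2" using assms by auto
  then have "X i (j-1) > 0" using assms unfolding pos_def by auto
  then show ?thesis using False \<open>j \<ge> 2\<close> unfolding insum_def by auto
qed

lemma pos_upd: "pos n X \<Longrightarrow> v > 0 \<Longrightarrow> pos n (upd2 X p q v)"
  unfolding pos_def upd2_def by auto

lemma pos_dupd:
  assumes "pos n X" "1 \<le> j" "j < i" "i \<le> n" "(i,j) \<noteq> (2,1)"
  shows "pos n (dupd i j X)"
proof -
  have "X i j > 0" using assms unfolding pos_def by auto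
  then show ?thesis unfolding dupd_def using insum_pos[OF assms] assms(1)
    by (intro pos_upd) auto
qed

lemma pos_lmap:
  assumes "pos n X" "1 \<le> k" "k + 1 < i" "i \<le> n"
  shows "pos n (lmap i k X)"
proof (cases "k = 1")
  case True
  have "X (i-1) 1 > 0" "X i 1 > 0" using assms True unfolding pos_def by auto
  then show ?thesis using True assms(1) unfolding lmap_def by (auto intro!: pos_upd)
next
  case False
  have "X (i-1) (k-1) > 0" "X (i-1) k > 0" "X i (k-1) > 0" "X i k > 0"
    using assms False unfolding pos_def by auto
  then show ?thesis using False assms(1) unfolding lmap_def Let_def
    by (auto intro!: pos_upd simp: add_pos_pos)
qed

lemma step_lmap:
  assumes P: "pos n Y" and k: "2 \<le> k" "k + 1 < i" "i \<le> n" and cnt: "i < n \<or> k - 1 \<le> m"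
  shows "Ecut n m (dupd (i-1) (k-1) (lmap i k Y)) = Ecut n m (dupd i k Y)"
proof -
  define a where "a = Y (i-1) (k-1)"
  define b where "b = Y (i-1) k"
  define c where "c = Y i (k-1)"
  define d where "d = Y i k"
  define sa where "sa = insum Y (i-1) (k-1)"
  define ub where "ub = (if k \<ge> i - 1 - 1 then 0 else Y (i-1-1) k)"
  define lc where "lc = (if k - 1 - 1 = 0 then 0 else Y i (k-1-1))"
  define A where "A = b*c/(a*b+a*c) * sa"
  define Z where "Z = dupd i k Y"
  have pa: "a > 0" and pb: "b > 0" and pc: "c > 0" and pd: "d > 0"
    using P k unfolding pos_def a_def b_def c_def d_def by auto
  have psa: "sa > 0" unfolding sa_def using insum_pos[OF P, of "k-1" "i-1"] k by auto
  have ik: "insum Y i k = b + c" using k unfolding insum_def b_def c_def by auto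
  have Zv: "Z = upd2 Y i k (d * (b + c))" unfolding Z_def dupd_def ik d_def by simp
  have e1: "dupd (i-1) (k-1) (lmap i k Y) = upd2 Z (i-1) (k-1) A"
  proof -
    define L where "L = lmap i k Y"
    have l: "L = upd2 (upd2 Y (i-1) (k-1) (b*c/(a*b+a*c))) i k (d*(b+c))"
      using k unfolding L_def lmap_def Let_def a_def b_def c_def d_def by simp
    have u1: "L (i-1-1) (k-1) = Y (i-1-1) (k-1)"
      using k unfolding l upd2_def by auto
    have u2: "L (i-1) (k-1-1) = Y (i-1) (k-1-1)"
      using k unfolding l upd2_def by auto
    have s: "insum L (i-1) (k-1) = sa"
      unfolding sa_def insum_def u1 u2 ..
    have la: "L (i-1) (k-1) = b*c/(a*b+a*c)" using k unfolding l upd2_def by auto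
    have lo: "L x y = Z x y" if "(x,y) \<noteq> (i-1,k-1)" for x y
      using that unfolding l Zv upd2_def by auto
    have "dupd (i-1) (k-1) L = upd2 L (i-1) (k-1) A"
      unfolding dupd_def s la A_def ..
    also have "\<dots> = upd2 Z (i-1) (k-1) A"
      unfolding upd2_def using lo by (auto simp: fun_eq_iff)
    finally show ?thesis unfolding L_def .
  qed
  have e2: "Z = upd2 Z (i-1) (k-1) a"
    unfolding Zv a_def using k by (auto simp: upd2_def fun_eq_iff)
  have K: "{(i-1,k-1),(i-1,k),(i,k-1)} \<subseteq> PP n" using k unfolding PP_def by auto
  have loc: "hh n m (upd2 Z (i-1) (k-1) A) i' j' = hh n m (upd2 Z (i-1) (k-1) a) i' j'"
    if "(i',j') \<in> PP n" "(i',j') \<notin> {(i-1,k-1),(i-1,k),(i,k-1)}" for i' j'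
  proof -
    have "hh n m (upd2 Z (i-1) (k-1) v) i' j' = hh n m Z i' j'" for v
      by (rule hh_upd_other) (use that k in auto)
    then show ?thesis by simp
  qed
  have Zo: "Z p q = Y p q" if "(p,q) \<noteq> (i,k)" for p q
    using that unfolding Zv upd2_def by auto
  have h1: "hh n m (upd2 Z (i-1) (k-1) v) (i-1) (k-1) = sa / v" for v
  proof -
    have u1: "upd2 Z (i-1) (k-1) v (i-1-1) (k-1) = Y (i-1-1) (k-1)"
      using k Zo[of "i-1-1" "k-1"] unfolding upd2_def by auto
    have u2: "k - 1 - 1 \<noteq> 0 \<Longrightarrow> upd2 Z (i-1) (k-1) v (i-1) (k-1-1) = Y (i-1) (k-1-1)"
      using k Zo[of "i-1" "k-1-1"] unfolding upd2_def by auto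
    have "insum (upd2 Z (i-1) (k-1) v) (i-1) (k-1) = sa"
      unfolding sa_def insum_def using u1 u2 by simp
    moreover have "upd2 Z (i-1) (k-1) v (i-1) (k-1) = v" unfolding upd2_def by simp
    moreover have "i - 1 < n" using k by auto
    ultimately show ?thesis unfolding hh_def tm_def by simp
  qed
  have h2: "hh n m (upd2 Z (i-1) (k-1) v) (i-1) k = (ub + v) / b" for v
  proof -
    have u1: "upd2 Z (i-1) (k-1) v (i-1-1) k = Y (i-1-1) k"
      using k Zo[of "i-1-1" "k"] unfolding upd2_def by auto
    have u2: "upd2 Z (i-1) (k-1) v (i-1) (k-1) = v" unfolding upd2_def by simp
    have u3: "upd2 Z (i-1) (k-1) v (i-1) k = b"
      using k Zo[of "i-1" "k"] unfolding upd2_def b_def by auto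
    have "insum (upd2 Z (i-1) (k-1) v) (i-1) k = ub + v"
      unfolding ub_def insum_def using u1 u2 k by simp
    moreover have "i - 1 < n" using k by auto
    ultimately show ?thesis using u3 unfolding hh_def tm_def by simp
  qed
  have h3: "hh n m (upd2 Z (i-1) (k-1) v) i (k-1) = (v + lc) / c" for v
  proof -
    have u1: "k - 1 - 1 \<noteq> 0 \<Longrightarrow> upd2 Z (i-1) (k-1) v i (k-1-1) = Y i (k-1-1)"
      using k Zo[of "i" "k-1-1"] unfolding upd2_def by auto
    have u2: "upd2 Z (i-1) (k-1) v (i-1) (k-1) = v" unfolding upd2_def by simp
    have u3: "upd2 Z (i-1) (k-1) v i (k-1) = c"
      using k Zo[of "i" "k-1"] unfolding upd2_def c_def by auto
    have "insum (upd2 Z (i-1) (k-1) v) i (k-1) = v + lc"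
    proof -
      have "\<not> (k - 1 \<ge> i - 1)" using k by auto
      then show ?thesis unfolding lc_def insum_def using u1 u2 by simp
    qed
    then show ?thesis using k u3 cnt unfolding hh_def tm_def by auto
  qed
  have d21: "(upd2 Z (i-1) (k-1) A) 2 1 = (upd2 Z (i-1) (k-1) a) 2 1"
    using k unfolding upd2_def by auto
  have dist: "(i-1,k-1) \<noteq> (i-1,k)" "(i-1,k-1) \<noteq> (i,k-1)" "(i-1,k) \<noteq> (i,k-1)"
    using k by auto
  have alg: "sa / A - sa / a + ((ub + A) / b - (ub + a) / b) + ((A + lc) / c - (a + lc) / c) = 0"
  proof -
    have Ae: "A = b*c*sa/(a*(b+c))" unfolding A_def by (simp add: algebra_simps)
    have r1: "sa / A = a*(b+c)/(b*c)" unfolding Ae using pa pb pc psa by (simp add: field_simps)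
    have bcp: "b + c > 0" using pb pc by simp
    have r2a: "A*(b+c) = b*c*sa/a" unfolding Ae using pa bcp by (simp add: divide_simps)
    have r2: "A*(b+c)/(b*c) = sa / a" unfolding r2a using pa pb pc psa by (simp add: field_simps)
    have r3: "(ub + A) / b - (ub + a) / b + ((A + lc) / c - (a + lc) / c) = (A - a)*(b+c)/(b*c)"
      using pb pc by (simp add: field_simps)
    have r4: "(A - a)*(b+c)/(b*c) = A*(b+c)/(b*c) - a*(b+c)/(b*c)"
      by (simp add: left_diff_distrib diff_divide_distrib)
    show ?thesis using r1 r2 r3 r4 by simp
  qed
  have "Ecut n m (upd2 Z (i-1) (k-1) A) = Ecut n m (upd2 Z (i-1) (k-1) a)"
    using Ecut_local[OF K loc] d21 dist h1 h2 h3 alg by simp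
  then show ?thesis using e1 e2 Z_def by simp
qed


lemma dupd_first:
  assumes P: "pos n X" and j: "1 \<le> j" "j + 1 < n"
  shows "Ecut n (j-1) X = Ecut n j (dupd n j X)"
proof -
  define s where "s = insum X n j"
  have ps: "s > 0" unfolding s_def using insum_pos[OF P j(1)] j by auto
  have px: "X n j > 0" using P j unfolding pos_def by auto
  have D: "dupd n j X = upd2 X n j (X n j * s)" unfolding dupd_def s_def ..
  have K: "{(n,j)} \<subseteq> PP n" using j unfolding PP_def by auto
  have loc: "hh n j (dupd n j X) i' j' = hh n (j-1) X i' j'"
    if "(i',j') \<in> PP n" "(i',j') \<notin> {(n,j)}" for i' j'
  proof (cases "(i',j') = (n, j+1)")
    case True
    then show ?thesis using j unfolding hh_def D upd2_def by auto
  next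
    case False
    have "hh n j (dupd n j X) i' j' = hh n j X i' j'"
      unfolding D by (rule hh_upd_other) (use that False j in \<open>auto simp: PP_def\<close>)
    also have "\<dots> = hh n (j-1) X i' j'"
      using that j unfolding hh_def PP_def by auto
    finally show ?thesis .
  qed
  have d21: "dupd n j X 2 1 = X 2 1" using j unfolding D upd2_def by auto
  have ins: "insum (dupd n j X) n j = s"
  proof -
    have "dupd n j X (n-1) j = X (n-1) j" "dupd n j X n (j-1) = X n (j-1)"
      using j unfolding D upd2_def by auto
    then show ?thesis unfolding insum_def s_def by simp
  qed
  have "hh n j (dupd n j X) n j = 1 / X n j"
    unfolding hh_def tm_def ins using ps px by (simp add: D upd2_def)
  moreover have "hh n (j-1) X n j = 1 / X n j" using j unfolding hh_def by auto
  ultimately show ?thesis using Ecut_local[OF K loc] d21 by simp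
qed

lemma pos_fold_lmap:
  assumes "pos n Y" "\<forall>k\<in>set ks. 1 \<le> k \<and> k \<le> j" "j + 1 < n"
  shows "pos n (fold (\<lambda>k Y. lmap (n-j+k) k Y) ks Y)"
  using assms
proof (induction ks arbitrary: Y)
  case Nil
  then show ?case by simp
next
  case (Cons k ks)
  have "pos n (lmap (n-j+k) k Y)"
    by (rule pos_lmap) (use Cons.prems in auto)
  then show ?case using Cons by simp
qed

lemma chain:
  assumes j: "j + 1 < n" and t: "1 \<le> t" "t \<le> j"
  shows "pos n Y \<Longrightarrow> Ecut n j (dupd (n-j+t) t Y) = Ecut n j (fold (\<lambda>k Y. lmap (n-j+k) k Y) (rev [1..<t+1]) Y)"
  using t
proof (induction t arbitrary: Y rule: nat_induct_at_least)
  case base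
  have i3: "n - j + 1 \<ge> 3" using j by auto
  have "lmap (n-j+1) 1 Y = dupd (n-j+1) 1 Y"
    unfolding lmap_def dupd_def insum_def using i3 by (auto simp: mult.commute)
  then show ?case by simp
next
  case (Suc t)
  have pY: "pos n Y" "Suc t \<le> j" using Suc.prems by auto
  have "Ecut n j (dupd (n-j+Suc t) (Suc t) Y)
      = Ecut n j (dupd (n-j+Suc t-1) (Suc t-1) (lmap (n-j+Suc t) (Suc t) Y))"
    by (rule step_lmap[symmetric]) (use Suc j in auto)
  also have "n-j+Suc t-1 = n-j+t" using j by auto
  also have "Ecut n j (dupd (n-j+t) (Suc t - 1) (lmap (n-j+Suc t) (Suc t) Y))
      = Ecut n j (fold (\<lambda>k Y. lmap (n-j+k) k Y) (rev [1..<t+1]) (lmap (n-j+Suc t) (Suc t) Y))"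
    using Suc.IH[of "lmap (n-j+Suc t) (Suc t) Y"] pos_lmap[OF pY(1), of "Suc t" "n-j+Suc t"] pY Suc.hyps j
    by auto
  also have "\<dots> = Ecut n j (fold (\<lambda>k Y. lmap (n-j+k) k Y) (rev [1..<Suc t+1]) Y)"
    by simp
  finally show ?case .
qed

lemma rho_step:
  assumes P: "pos n X" and j: "1 \<le> j" "j + 1 < n"
  shows "Ecut n (j-1) X = Ecut n j (rho n j X) \<and> pos n (rho n j X)"
proof
  have "Ecut n (j-1) X = Ecut n j (dupd n j X)" by (rule dupd_first[OF P j])
  also have "\<dots> = Ecut n j (dupd (n-j+j) j X)" using j by simp
  also have "\<dots> = Ecut n j (rho n j X)" unfolding rho_def by (rule chain[OF j(2) j(1) order_refl P])
  finally show "Ecut n (j-1) X = Ecut n j (rho n j X)" .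
  show "pos n (rho n j X)" unfolding rho_def
    by (rule pos_fold_lmap[OF P _ j(2)]) auto
qed

lemma fold_rho:
  assumes P: "pos n X" and n: "3 \<le> n"
  shows "t + 2 \<le> n \<Longrightarrow> Ecut n 0 X = Ecut n t (fold (\<lambda>j Y. rho n j Y) [1..<t+1] X) \<and> pos n (fold (\<lambda>j Y. rho n j Y) [1..<t+1] X)"
proof (induction t)
  case 0
  then show ?case using P by simp
next
  case (Suc t)
  define F where "F = fold (\<lambda>j Y. rho n j Y) [1..<t+1] X"
  have IH: "Ecut n 0 X = Ecut n t F" "pos n F" using Suc unfolding F_def by auto
  have R: "Ecut n (Suc t - 1) F = Ecut n (Suc t) (rho n (Suc t) F) \<and> pos n (rho n (Suc t) F)"
    by (rule rho_step[OF IH(2)]) (use Suc.prems in auto)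
  have "fold (\<lambda>j Y. rho n j Y) [1..<Suc t+1] X = rho n (Suc t) F" unfolding F_def by simp
  then show ?case using IH R by simp
qed


lemma bmap_first:
  assumes P: "pos n X" and n: "3 \<le> n"
  shows "Ecut n (n-2) X = Ecut n (n-1) (bmap n n (rtri n X)) \<and> pos n (bmap n n (rtri n X))"
proof -
  define x where "x = X n (n-1)"
  define l where "l = X n (n-2)"
  have px: "x > 0" and pl: "l > 0" using P n unfolding pos_def x_def l_def by auto
  have B: "bmap n n (rtri n X) = upd2 X n (n-1) (l / (1/x))"
    using n unfolding bmap_def rtri_def getx_def upd2_def l_def x_def by (auto simp: fun_eq_iff)
  have K: "{(n,n-1)} \<subseteq> PP n" using n unfolding PP_def by auto
  have loc: "hh n (n-1) (upd2 X n (n-1) (l / (1/x))) i' j' = hh n (n-2) X i' j'"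
    if "(i',j') \<in> PP n" "(i',j') \<notin> {(n,n-1)}" for i' j'
  proof -
    have "hh n (n-1) (upd2 X n (n-1) (l / (1/x))) i' j' = hh n (n-1) X i' j'"
      by (rule hh_upd_other) (use that n in \<open>auto simp: PP_def\<close>)
    also have "\<dots> = hh n (n-2) X i' j'"
      using that n unfolding hh_def PP_def by auto
    finally show ?thesis .
  qed
  have d21: "upd2 X n (n-1) (l / (1/x)) 2 1 = X 2 1" using n unfolding upd2_def by auto
  have ins: "insum (upd2 X n (n-1) (l / (1/x))) n (n-1) = l"
    using n unfolding insum_def upd2_def l_def by (auto simp: numeral_2_eq_2)
  have "hh n (n-1) (upd2 X n (n-1) (l / (1/x))) n (n-1) = 1 / x"
    unfolding hh_def tm_def ins using px pl by (simp add: upd2_def)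
  moreover have "hh n (n-2) X n (n-1) = 1 / x" using n unfolding hh_def x_def by auto
  ultimately have "Ecut n (n-2) X = Ecut n (n-1) (bmap n n (rtri n X))"
    using Ecut_local[OF K loc] d21 B by simp
  moreover have "pos n (bmap n n (rtri n X))" unfolding B using P px pl by (intro pos_upd) auto
  ultimately show ?thesis by simp
qed

lemma bmap_step:
  assumes P: "pos n Y" and m: "2 \<le> m" "m < n"
  shows "Ecut n (n-1) (bmap n m Y) = Ecut n (n-1) Y \<and> pos n (bmap n m Y)"
proof (cases "even (n - m)")
  case False
  then show ?thesis using P unfolding bmap_def by simp
next
  case True
  define D where "D = Y (m+1) (m-1)"
  define L where "L = (if m = 2 then 1 else Y m (m-2))"
  define v where "v = Y m (m-1)"
  define lf where "lf = (if m - 1 - 1 = 0 then 0 else Y (m+1) (m-1-1))"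
  define w where "w = D * L / v"
  have pD: "D > 0" and pv: "v > 0" using P m unfolding pos_def D_def v_def by auto
  have pL: "L > 0" using P m unfolding pos_def L_def by auto
  have B: "bmap n m Y = upd2 Y m (m-1) w"
  proof -
    have "getx n Y (m+1) (m-1) = D" using m unfolding getx_def D_def by auto
    moreover have "getx n Y m (m-2) = L" using m unfolding getx_def L_def by auto
    ultimately show ?thesis using True m unfolding bmap_def w_def v_def by simp
  qed
  have Yv: "Y = upd2 Y m (m-1) v" unfolding v_def upd2_def by (auto simp: fun_eq_iff)
  have K: "{(m,m-1),(m+1,m-1)} \<subseteq> PP n" using m unfolding PP_def by auto
  have loc: "hh n (n-1) (upd2 Y m (m-1) w) i' j' = hh n (n-1) Y i' j'"
    if "(i',j') \<in> PP n" "(i',j') \<notin> {(m,m-1),(m+1,m-1)}" for i' j'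
    by (rule hh_upd_other) (use that m in \<open>auto simp: PP_def\<close>)
  have h2: "hh n (n-1) (upd2 Y m (m-1) u) (m+1) (m-1) = (u + lf) / D" for u
  proof -
    have "insum (upd2 Y m (m-1) u) (m+1) (m-1) = u + lf"
      using m unfolding insum_def upd2_def lf_def by auto
    moreover have "upd2 Y m (m-1) u (m+1) (m-1) = D" unfolding upd2_def D_def by auto
    ultimately show ?thesis using m unfolding hh_def tm_def by auto
  qed
  have h1: "1 / upd2 Y m (m-1) u 2 1 + hh n (n-1) (upd2 Y m (m-1) u) m (m-1)
      = 1 / Y 2 1 + L / u - (if m = 2 then 1 / Y 2 1 else 0)" for u
  proof (cases "m = 2")
    case True
    then show ?thesis using m unfolding hh_def tm_def insum_def upd2_def L_def by auto
  next
    case False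
    have "insum (upd2 Y m (m-1) u) m (m-1) = L"
      using m False unfolding insum_def upd2_def L_def by (auto simp: numeral_2_eq_2)
    moreover have "upd2 Y m (m-1) u 2 1 = Y 2 1" using m False unfolding upd2_def by auto
    ultimately show ?thesis using m False unfolding hh_def tm_def by (auto simp: upd2_def)
  qed
  have dist: "(m,m-1) \<noteq> (m+1,m-1)" by simp
  have EL: "Ecut n (n-1) (upd2 Y m (m-1) w) = Ecut n (n-1) (upd2 Y m (m-1) v)
      + (1 / upd2 Y m (m-1) w 2 1 + hh n (n-1) (upd2 Y m (m-1) w) m (m-1))
      - (1 / upd2 Y m (m-1) v 2 1 + hh n (n-1) (upd2 Y m (m-1) v) m (m-1))
      + (hh n (n-1) (upd2 Y m (m-1) w) (m+1) (m-1) - hh n (n-1) (upd2 Y m (m-1) v) (m+1) (m-1))"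
    using Ecut_local[OF K, of "n-1" "upd2 Y m (m-1) w" "n-1" "upd2 Y m (m-1) v"] loc Yv dist
    by simp
  have alg: "L / w - L / v + ((w + lf) / D - (v + lf) / D) = 0"
  proof -
    have a1: "L / w = v / D" unfolding w_def using pD pL pv by (simp add: field_simps)
    have a2: "(w + lf) / D - (v + lf) / D = (w - v) / D" by (simp add: diff_divide_distrib add_divide_distrib)
    have a3: "w / D = L / v" unfolding w_def using pD pL pv by (simp add: field_simps)
    show ?thesis using a1 a2 a3 by (simp add: diff_divide_distrib)
  qed
  have "Ecut n (n-1) (bmap n m Y) = Ecut n (n-1) Y"
    unfolding B using EL h1[of w] h1[of v] h2[of w] h2[of v] alg Yv[symmetric] by simp
  moreover have "pos n (bmap n m Y)" unfolding B w_def using P pD pL pv by (intro pos_upd) auto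
  ultimately show ?thesis by simp
qed


lemma fold_bmap:
  "pos n Y \<Longrightarrow> \<forall>m\<in>set ms. 2 \<le> m \<and> m < n \<Longrightarrow>
   Ecut n (n-1) (fold (\<lambda>m Y. bmap n m Y) ms Y) = Ecut n (n-1) Y \<and> pos n (fold (\<lambda>m Y. bmap n m Y) ms Y)"
proof (induction ms arbitrary: Y)
  case Nil
  then show ?case by simp
next
  case (Cons m ms)
  have "Ecut n (n-1) (bmap n m Y) = Ecut n (n-1) Y \<and> pos n (bmap n m Y)"
    by (rule bmap_step) (use Cons.prems in auto)
  then show ?case using Cons.IH[of "bmap n m Y"] Cons.prems by simp
qed

lemma rholast_lem:
  assumes P: "pos n X" and n: "3 \<le> n"
  shows "Ecut n (n-2) X = Ecut n (n-1) (rholast n X) \<and> pos n (rholast n X)"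
proof -
  have r: "rev [2..<n+1] = n # rev [2..<n]" using n by simp
  have "rholast n X = fold (\<lambda>m Y. bmap n m Y) (rev [2..<n]) (bmap n n (rtri n X))"
    unfolding rholast_def r by simp
  then show ?thesis using bmap_first[OF P n] fold_bmap[of n "bmap n n (rtri n X)" "rev [2..<n]"] by simp
qed

lemma Rtri_lem:
  assumes P: "pos n X" and n: "3 \<le> n"
  shows "Etri n (Rtri n X) = Ecut n 0 X \<and> pos n (Rtri n X)"
proof -
  have e0: "n - 1 = (n-2)+1" using n by simp
  have e: "[1..<n-1] = [1..<(n-2)+1]" by (subst e0) (rule refl)
  have F: "Ecut n 0 X = Ecut n (n-2) (fold (\<lambda>j Y. rho n j Y) [1..<n-1] X) \<and> pos n (fold (\<lambda>j Y. rho n j Y) [1..<n-1] X)"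
    unfolding e by (rule fold_rho[OF P n]) (use n in auto)
  then show ?thesis unfolding Rtri_def Etri_Ecut using rholast_lem[of n "fold (\<lambda>j Y. rho n j Y) [1..<n-1] X"] n
    by simp
qed

lemma Ecut0:
  assumes n: "3 \<le> n"
  shows "Ecut n 0 X = Etri (n-1) X + (\<Sum>j\<in>{1..<n}. 1 / X n j)"
proof -
  have I: "{1..n} = insert n {1..n-1}" using n by auto
  have "(\<Sum>i\<in>{1..n}. \<Sum>j\<in>{1..<i}. hh n 0 X i j)
      = (\<Sum>j\<in>{1..<n}. hh n 0 X n j) + (\<Sum>i\<in>{1..n-1}. \<Sum>j\<in>{1..<i}. hh n 0 X i j)"
    unfolding I by (subst sum.insert) auto
  also have "(\<Sum>j\<in>{1..<n}. hh n 0 X n j) = (\<Sum>j\<in>{1..<n}. 1 / X n j)"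
    by (rule sum.cong) (auto simp: hh_def)
  also have "(\<Sum>i\<in>{1..n-1}. \<Sum>j\<in>{1..<i}. hh n 0 X i j)
     = (\<Sum>i\<in>{1..n-1}. \<Sum>j\<in>{1..<i}. ((if j \<ge> i - 1 then 0 else X (i-1) j) + (if j - 1 = 0 then 0 else X i (j-1))) / X i j)"
    by (intro sum.cong refl) (auto simp: hh_def tm_def insum_def)
  finally show ?thesis unfolding Ecut_def Etri_def by simp
qed

lemma Ttri_Suc:
  assumes "2 \<le> n"
  shows "Ttri (Suc n) X = Rtri (Suc n) (\<lambda>i j. if i < Suc n then Ttri n X i j else X i j)"
proof -
  obtain m where m: "n = m + 2" using assms by (metis add.commute le_Suc_ex)
  have "Suc n = Suc (Suc (Suc m))" "m + 3 = Suc n" "m + 2 = n" using m by auto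
  then show ?thesis by (metis Ttri.simps(4))
qed

lemma Etri_cong:
  assumes "2 \<le> n" "\<And>i j. i \<le> n \<Longrightarrow> X i j = Y i j"
  shows "Etri n X = Etri n Y"
proof -
  have "X 2 1 = Y 2 1" using assms by auto
  moreover have "(\<Sum>i\<in>{1..n}. \<Sum>j\<in>{1..<i}. ((if j \<ge> i - 1 then 0 else X (i-1) j) + (if j - 1 = 0 then 0 else X i (j-1))) / X i j)
    = (\<Sum>i\<in>{1..n}. \<Sum>j\<in>{1..<i}. ((if j \<ge> i - 1 then 0 else Y (i-1) j) + (if j - 1 = 0 then 0 else Y i (j-1))) / Y i j)"
    using assms(2) by (intro sum.cong refl) auto
  ultimately show ?thesis unfolding Etri_def by simp
qed

lemma main_ind:
  fixes W :: tarr
  shows "2 \<le> n \<Longrightarrow> pos n W \<Longrightarrow> pos n (Ttri n W) \<and> Etri n (Ttri n W) = (\<Sum>i\<in>{1..n}. \<Sum>j\<in>{1..<i}. 1 / W i j)"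
proof (induction n rule: nat_induct_at_least)
  case base
  have "Ttri 2 W = W" by (simp add: numeral_2_eq_2)
  moreover have "{1..<2::nat} = {1}" by auto
  moreover have "{1..2::nat} = {1,2}" by auto
  ultimately show ?case using base by (simp add: Etri_def)
next
  case (Suc n)
  define Z where "Z = (\<lambda>i j. if i < Suc n then Ttri n W i j else W i j)"
  have pW: "pos n W" using Suc.prems unfolding pos_def by auto
  have IH: "pos n (Ttri n W)" "Etri n (Ttri n W) = (\<Sum>i\<in>{1..n}. \<Sum>j\<in>{1..<i}. 1 / W i j)"
    using Suc.IH[OF pW] by auto
  have pZ: "pos (Suc n) Z"
    using IH(1) Suc.prems unfolding pos_def Z_def by auto
  have T: "Ttri (Suc n) W = Rtri (Suc n) Z" unfolding Z_def by (rule Ttri_Suc[OF Suc.hyps])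
  have R: "Etri (Suc n) (Rtri (Suc n) Z) = Ecut (Suc n) 0 Z \<and> pos (Suc n) (Rtri (Suc n) Z)"
    by (rule Rtri_lem[OF pZ]) (use Suc.hyps in auto)
  have E0: "Ecut (Suc n) 0 Z = Etri n Z + (\<Sum>j\<in>{1..<Suc n}. 1 / Z (Suc n) j)"
    using Ecut0[of "Suc n" Z] Suc.hyps by simp
  have "Etri n Z = Etri n (Ttri n W)"
    by (rule Etri_cong) (use Suc.hyps in \<open>auto simp: Z_def\<close>)
  moreover have "(\<Sum>j\<in>{1..<Suc n}. 1 / Z (Suc n) j) = (\<Sum>j\<in>{1..<Suc n}. 1 / W (Suc n) j)"
    unfolding Z_def by simp
  moreover have "{1..Suc n} = insert (Suc n) {1..n}" by auto
  ultimately show ?case using T R E0 IH(2) by (simp add: add.commute)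
qed

theorem theorem6p1:
  fixes n :: nat and W :: "nat \<Rightarrow> nat \<Rightarrow> real"
  assumes "n \<ge> 2"
    and "\<And>i j. 1 \<le> j \<Longrightarrow> j < i \<Longrightarrow> i \<le> n \<Longrightarrow> W i j > 0"
  shows "Etri n (Ttri n W) = (\<Sum>i\<in>{1..n}. \<Sum>j\<in>{1..<i}. 1 / W i j)"
  using main_ind[OF assms(1)] assms(2) unfolding pos_def by auto

end
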